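(* Let $\mathcal P$ be a CPOS $2n$-gon. Let $A^+$ be the area of the polygon $P_1P_2\cdots P_{n+1}$ and $A^-$ the area of the polygon $P_{n+1}P_{n+2}\cdots P_{2n}P_1$ (the two parts into which the great diagonal $P_1P_{n+1}$ divides $\mathcal P$). Then $$A^- - A^+ = 2\sum_{j=1}^n\big[v(j+\tfrac12),u_j\big].$$
   Context: A CPOS $2n$-gon ($n\ge2$) is a closed planar polygon $\mathcal P$ with vertices $P_1,\dots,P_{2n}$ (indices mod $2n$) bounding a convex region, with no two adjacent sides parallel, with $P_{i+n+1}-P_{i+n}$ parallel to $P_{i+1}-P_i$ for all $i$, and positively oriented: $[P_{i+1}-P_i,P_{j+1}-P_j]>0$ for $1\le i<j\le n$, where $[a,b]$ is the determinant of $a,b\in\mathbb R^2$. $M_i=\tfrac12(P_i+P_{i+n})$ (so $M_{n+1}=M_1$). For $1\le i\le n$ set $v(i+\tfrac12)=M_{i+1}-M_i$ and $u_i=P_i-M_i$. *)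

theory Defs
  imports "HOL-Analysis.Analysis"
begin

definition det2 :: "real^2 \<Rightarrow> real^2 \<Rightarrow> real" where
  "det2 a b = a$1 * b$2 - a$2 * b$1"

text \<open>Vertices P_1..P_2n are given by a 2n-periodic function P :: nat => real^2
  (indices taken mod 2n). Edge e_i = P_(i+1) - P_i.\<close>
definition edge :: "(nat \<Rightarrow> real^2) \<Rightarrow> nat \<Rightarrow> real^2" where
  "edge P i = P (Suc i) - P i"

text \<open>CPOS 2n-gon: periodic, convex (every vertex lies in the closed left half-plane of
  every edge line, i.e. the polygon bounds a convex region with positive orientation),
  no two adjacent sides parallel, opposite sides parallel, positively oriented.\<close>
definition CPOS :: "nat \<Rightarrow> (nat \<Rightarrow> real^2) \<Rightarrow> bool" where
  "CPOS n P \<longleftrightarrow> n \<ge> 2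
     \<and> (\<forall>i. P (i + 2*n) = P i)
     \<and> (\<forall>i j. det2 (edge P i) (P j - P i) \<ge> 0)
     \<and> (\<forall>i. det2 (edge P i) (edge P (Suc i)) \<noteq> 0)
     \<and> (\<forall>i. det2 (edge P (i + n)) (edge P i) = 0)
     \<and> (\<forall>i j. 1 \<le> i \<and> i < j \<and> j \<le> n \<longrightarrow> det2 (edge P i) (edge P j) > 0)"

definition midpt :: "nat \<Rightarrow> (nat \<Rightarrow> real^2) \<Rightarrow> nat \<Rightarrow> real^2" where
  "midpt n P i = (1/2) *\<^sub>R (P i + P (i + n))"

text \<open>v(i+1/2) = M_(i+1) - M_i\<close>
definition vhalf :: "nat \<Rightarrow> (nat \<Rightarrow> real^2) \<Rightarrow> nat \<Rightarrow> real^2" where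
  "vhalf n P i = midpt n P (Suc i) - midpt n P i"

definition uvec :: "nat \<Rightarrow> (nat \<Rightarrow> real^2) \<Rightarrow> nat \<Rightarrow> real^2" where
  "uvec n P i = P i - midpt n P i"

end

theory Submission
  imports Defs
begin

lemma det2_tri_in:
  fixes A B C y :: "real^2"
  assumes D: "det2 (B - A) (C - A) > 0"
    and h1: "det2 (B - A) (y - A) \<ge> 0" and h2: "det2 (C - B) (y - B) \<ge> 0"
    and h3: "det2 (C - A) (y - A) \<le> 0"
  shows "y \<in> convex hull {A, B, C}"
proof -
  define d where "d = det2 (B - A) (C - A)"
  define u where "u = det2 (C - B) (y - B) / d"
  define v where "v = - det2 (C - A) (y - A) / d"
  define w where "w = det2 (B - A) (y - A) / d"
  have dpos: "d > 0" using D d_def by simp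
  have num: "det2 (C - B) (y - B) - det2 (C - A) (y - A) + det2 (B - A) (y - A) = d"
    unfolding d_def det2_def by (simp add: algebra_simps)
  have "u + v + w = (det2 (C - B) (y - B) - det2 (C - A) (y - A) + det2 (B - A) (y - A)) / d"
    unfolding u_def v_def w_def by (simp add: diff_divide_distrib add_divide_distrib)
  hence "u + v + w = 1" using num dpos by simp
  moreover have "y = u *\<^sub>R A + v *\<^sub>R B + w *\<^sub>R C"
  proof -
    have du: "d * u = det2 (C - B) (y - B)" "d * v = - det2 (C - A) (y - A)" "d * w = det2 (B - A) (y - A)"
      using dpos unfolding u_def v_def w_def by auto
    have "d *\<^sub>R y = (d * u) *\<^sub>R A + (d * v) *\<^sub>R B + (d * w) *\<^sub>R C"
      unfolding du unfolding d_def
      by (simp add: vec_eq_iff forall_2 det2_def algebra_simps)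
    hence "(1/d) *\<^sub>R (d *\<^sub>R y) = (1/d) *\<^sub>R ((d * u) *\<^sub>R A + (d * v) *\<^sub>R B + (d * w) *\<^sub>R C)" by simp
    thus ?thesis using dpos by (simp add: scaleR_add_right)
  qed
  moreover have "0 \<le> u" "0 \<le> v" "0 \<le> w" using dpos h1 h2 h3 unfolding u_def v_def w_def
    by (auto simp: divide_nonpos_pos)
  ultimately show ?thesis unfolding convex_hull_3 by blast
qed

lemma tri_measure:
  fixes A B C :: "real^2"
  assumes "det2 (B - A) (C - A) > 0"
  shows "measure lebesgue (convex hull {A, B, C}) = det2 (B - A) (C - A) / 2"
proof -
  have c: "compact (convex hull {A, B, C})" by (intro finite_imp_compact_convex_hull) auto
  have "measure lebesgue (convex hull {A, B, C}) = measure lborel (convex hull {A, B, C})"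
    using c by (intro measure_completion) (auto dest: compact_imp_closed)
  also have "\<dots> = det2 (B - A) (C - A) / 2" using assms
    using content_triangle[of A B C] by (simp add: det2_def algebra_simps)
  finally show ?thesis .
qed

lemma det2_comb:
  assumes "u + v = 1"
  shows "det2 w ((u *\<^sub>R x + v *\<^sub>R y) - p) = u * det2 w (x - p) + v * det2 w (y - p)"
proof -
  have pp: "p = u *\<^sub>R p + v *\<^sub>R p" using assms by (simp add: scaleR_left_distrib[symmetric])
  have "(u *\<^sub>R x + v *\<^sub>R y) - p = u *\<^sub>R (x - p) + v *\<^sub>R (y - p)"
    by (subst pp) (simp add: algebra_simps)
  show ?thesis unfolding \<open>(u *\<^sub>R x + v *\<^sub>R y) - p = _\<close> by (simp add: det2_def algebra_simps)
qed

lemma convex_det2_ge: "convex {y. det2 w (y - p) \<ge> 0}"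
  unfolding convex_def by (auto simp: det2_comb)

lemma convex_det2_le: "convex {y. det2 w (y - p) \<le> 0}"
proof -
  have "{y. det2 w (y - p) \<le> 0} = {y. det2 (-w) (y - p) \<ge> 0}" by (auto simp: det2_def)
  thus ?thesis using convex_det2_ge by simp
qed

lemma negligible_det2_line:
  assumes "w \<noteq> 0"
  shows "negligible {y. det2 w (y - p) = 0}"
proof -
  define c :: "real^2" where "c = vector [- (w$2), w$1]"
  have "c \<noteq> 0"
  proof
    assume "c = 0"
    hence "c$1 = 0" "c$2 = 0" by auto
    hence "w$1 = 0" "w$2 = 0" by (auto simp: c_def)
    hence "w = 0" by (simp add: vec_eq_iff forall_2)
    thus False using assms by simp
  qed
  have "{y. det2 w (y - p) = 0} = {y. c \<bullet> y = c \<bullet> p}"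
    by (auto simp: c_def det2_def inner_vec_def sum_2 algebra_simps)
  thus ?thesis using negligible_hyperplane[of c "c \<bullet> p"] \<open>c \<noteq> 0\<close> by simp
qed

lemma det2_self [simp]: "det2 x x = 0" by (simp add: det2_def)
lemma det2_zero [simp]: "det2 0 x = 0" "det2 x 0 = 0" by (simp_all add: det2_def)

locale fan =
  fixes P :: "nat \<Rightarrow> real^2" and a b :: nat
  assumes ab: "a + 2 \<le> b"
    and H1: "\<And>k j. a \<le> k \<Longrightarrow> k < b \<Longrightarrow> a \<le> j \<Longrightarrow> j \<le> b \<Longrightarrow> det2 (edge P k) (P j - P k) \<ge> 0"
    and H2: "\<And>l i. a \<le> l \<Longrightarrow> l < i \<Longrightarrow> i < b \<Longrightarrow> det2 (edge P l) (edge P i) > 0"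
begin

lemma aux1:
  assumes "a \<le> j" "j \<le> k" "k < b"
  shows "det2 (P j - P a) (edge P k) \<ge> 0"
  using assms(1,2)
proof (induction j rule: dec_induct)
  case base thus ?case by simp
next
  case (step n)
  have "det2 (P (Suc n) - P a) (edge P k) = det2 (P n - P a) (edge P k) + det2 (edge P n) (edge P k)"
    by (simp add: edge_def det2_def algebra_simps)
  moreover have "det2 (edge P n) (edge P k) > 0" using H2[of n k] step assms by auto
  ultimately show ?case using step by simp
qed

lemma G1:
  assumes "a \<le> j" "j \<le> k" "k \<le> b"
  shows "det2 (P k - P a) (P j - P a) \<le> 0"
  using assms(2,3)
proof (induction k rule: dec_induct)
  case base thus ?case by simp
next
  case (step n)
  have "det2 (P (Suc n) - P a) (P j - P a) = det2 (P n - P a) (P j - P a) - det2 (P j - P a) (edge P n)"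
    by (simp add: edge_def det2_def algebra_simps)
  moreover have "det2 (P j - P a) (edge P n) \<ge> 0" using aux1[of j n] step assms by auto
  ultimately show ?case using step by simp
qed

lemma G2:
  assumes "a < m" "m < b"
  shows "det2 (P m - P a) (P (Suc m) - P a) > 0"
proof -
  obtain q where q: "m = Suc q" using assms by (cases m) auto
  have "det2 (P m - P a) (P (Suc m) - P a) = det2 (P q - P a) (edge P m) + det2 (edge P q) (edge P m)"
    by (simp add: q edge_def det2_def algebra_simps)
  moreover have "det2 (P q - P a) (edge P m) \<ge> 0" using aux1[of q m] assms q by auto
  moreover have "det2 (edge P q) (edge P m) > 0" using H2[of q m] assms q by auto
  ultimately show ?thesis by simp
qed

definition hrep :: "nat \<Rightarrow> (real^2) set" where
  "hrep m = (\<Inter>k\<in>{a..<m}. {y. det2 (edge P k) (y - P k) \<ge> 0}) \<inter> {y. det2 (P m - P a) (y - P a) \<le> 0}"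

lemma convex_hrep: "convex (hrep m)"
  unfolding hrep_def by (intro convex_Int convex_INT convex_det2_ge convex_det2_le)

lemma K_sub_hrep:
  assumes "m \<le> b"
  shows "convex hull (P ` {a..m}) \<subseteq> hrep m"
proof (rule hull_minimal)
  show "convex (hrep m)" by (rule convex_hrep)
  show "P ` {a..m} \<subseteq> hrep m"
  proof
    fix y assume "y \<in> P ` {a..m}"
    then obtain j where j: "a \<le> j" "j \<le> m" "y = P j" by auto
    have "det2 (edge P k) (P j - P k) \<ge> 0" if "k \<in> {a..<m}" for k
      using H1[of k j] that j assms by auto
    moreover have "det2 (P m - P a) (P j - P a) \<le> 0" using G1[of j m] j assms by auto
    ultimately show "y \<in> hrep m" unfolding hrep_def j by auto
  qed
qed

lemma fan_main:
  assumes "a + 2 \<le> m" "m \<le> b"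
  shows "hrep m \<subseteq> convex hull (P ` {a..m}) \<and>
    measure lebesgue (convex hull (P ` {a..m})) = (\<Sum>k=a+1..m-1. det2 (P k - P a) (P (Suc k) - P a)) / 2"
  using assms
proof (induction m rule: dec_induct)
  case base
  have im: "P ` {a..a+2} = {P a, P (Suc a), P (Suc (Suc a))}"
  proof -
    have "{a..a+2} = {a, Suc a, Suc (Suc a)}" by auto
    thus ?thesis by simp
  qed
  have D: "det2 (P (Suc a) - P a) (P (Suc (Suc a)) - P a) > 0" using G2[of "Suc a"] ab by auto
  have "hrep (a+2) \<subseteq> convex hull {P a, P (Suc a), P (Suc (Suc a))}"
  proof
    fix y assume y: "y \<in> hrep (a+2)"
    have "det2 (edge P a) (y - P a) \<ge> 0" "det2 (edge P (Suc a)) (y - P (Suc a)) \<ge> 0"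
      "det2 (P (a+2) - P a) (y - P a) \<le> 0"
      using y unfolding hrep_def by auto
    thus "y \<in> convex hull {P a, P (Suc a), P (Suc (Suc a))}"
      by (intro det2_tri_in[OF D]) (auto simp: edge_def)
  qed
  moreover have "measure lebesgue (convex hull {P a, P (Suc a), P (Suc (Suc a))}) = 
     det2 (P (Suc a) - P a) (P (Suc (Suc a)) - P a) / 2" by (rule tri_measure[OF D])
  ultimately show ?case unfolding im by simp
next
  case (step m)
  let ?K = "convex hull (P ` {a..m})"
  let ?K' = "convex hull (P ` {a..Suc m})"
  let ?T = "convex hull {P a, P m, P (Suc m)}"
  define f where "f y = det2 (P m - P a) (y - P a)" for y
  have D: "det2 (P m - P a) (P (Suc m) - P a) > 0" using G2[of m] step by auto
  have IH1: "hrep m \<subseteq> ?K" and IH2: "measure lebesgue ?K = (\<Sum>k=a+1..m-1. det2 (P k - P a) (P (Suc k) - P a)) / 2"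
    using step by auto
  have i: "hrep (Suc m) \<subseteq> ?K \<union> ?T"
  proof
    fix y assume y: "y \<in> hrep (Suc m)"
    show "y \<in> ?K \<union> ?T"
    proof (cases "f y \<le> 0")
      case True
      hence "y \<in> hrep m" using y unfolding hrep_def f_def by auto
      thus ?thesis using IH1 by auto
    next
      case False
      have "det2 (edge P m) (y - P m) \<ge> 0" "det2 (P (Suc m) - P a) (y - P a) \<le> 0"
        using y step unfolding hrep_def by auto
      hence "y \<in> ?T" using False unfolding f_def
        by (intro det2_tri_in[OF D]) (auto simp: edge_def)
      thus ?thesis by auto
    qed
  qed
  have ii: "?K' \<subseteq> hrep (Suc m)" using K_sub_hrep step by auto
  have iii: "?K \<union> ?T \<subseteq> ?K'"
  proof -
    have "?K \<subseteq> ?K'" by (intro hull_mono image_mono) auto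
    moreover have "?T \<subseteq> ?K'" using step by (intro hull_mono) auto
    ultimately show ?thesis by auto
  qed
  have eq: "?K' = ?K \<union> ?T" using i ii iii by auto
  have Kf: "?K \<subseteq> {y. f y \<le> 0}" unfolding f_def
  proof (rule hull_minimal)
    show "convex {y. det2 (P m - P a) (y - P a) \<le> 0}" by (rule convex_det2_le)
    show "P ` {a..m} \<subseteq> {y. det2 (P m - P a) (y - P a) \<le> 0}"
      using G1 step by auto
  qed
  have Tf: "?T \<subseteq> {y. f y \<ge> 0}" unfolding f_def
  proof (rule hull_minimal)
    show "convex {y. det2 (P m - P a) (y - P a) \<ge> 0}" by (rule convex_det2_ge)
    show "{P a, P m, P (Suc m)} \<subseteq> {y. det2 (P m - P a) (y - P a) \<ge> 0}"
      using D by auto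
  qed
  have w0: "P m - P a \<noteq> 0" using D by auto
  have negl: "negligible (?K \<inter> ?T)"
    by (rule negligible_subset[OF negligible_det2_line[OF w0, of "P a"]]) (use Kf Tf f_def in force)
  have mK: "?K \<in> lmeasurable" "?T \<in> lmeasurable"
    by (intro lmeasurable_compact finite_imp_compact_convex_hull; simp)+
  have "measure lebesgue ?K' = measure lebesgue ?K + measure lebesgue ?T"
    unfolding eq using measure_Un3[OF mK] negligible_imp_measure0[OF negl] by simp
  also have "measure lebesgue ?T = det2 (P m - P a) (P (Suc m) - P a) / 2"
    by (rule tri_measure[OF D])
  also have "(\<Sum>k=a+1..Suc m - 1. det2 (P k - P a) (P (Suc k) - P a)) =
      (\<Sum>k=a+1..m-1. det2 (P k - P a) (P (Suc k) - P a)) + det2 (P m - P a) (P (Suc m) - P a)"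
  proof -
    obtain q where q: "m = Suc q" using step by (cases m) auto
    have "a + 1 \<le> Suc q" using step q by auto
    thus ?thesis using q by (simp add: sum.cl_ivl_Suc)
  qed
  ultimately show ?case using IH2 eq i ii by (auto simp: add_divide_distrib)
qed

end


lemma (in fan) fan_area:
  "measure lebesgue (convex hull (P ` {a..b})) = (\<Sum>k=a+1..<b. det2 (P k - P a) (P (Suc k) - P a)) / 2"
proof -
  have "{a+1..b-1} = {a+1..<b}" using ab by auto
  thus ?thesis using fan_main[of b] ab by simp
qed

lemma par_scale:
  fixes x y :: "real^2"
  assumes "det2 x y = 0" "y \<noteq> 0"
  shows "\<exists>c. x = c *\<^sub>R y"
proof (cases "y$1 = 0")
  case True
  hence y2: "y$2 \<noteq> 0" using assms(2) by (auto simp: vec_eq_iff forall_2)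
  show ?thesis
    apply (rule exI[of _ "x$2 / y$2"])
    using assms(1) True y2 by (auto simp: vec_eq_iff forall_2 det2_def field_simps)
next
  case False
  show ?thesis
    apply (rule exI[of _ "x$1 / y$1"])
    using assms(1) False by (auto simp: vec_eq_iff forall_2 det2_def field_simps)
qed

lemma cneg:
  assumes C: "CPOS n P" and i: "1 \<le> i" "i \<le> n"
  shows "\<exists>c<0. edge P (i+n) = c *\<^sub>R edge P i"
  using i
proof (induction i rule: less_induct)
  case (less i)
  from C have n2: "n \<ge> 2" and conv: "\<And>i j. det2 (edge P i) (P j - P i) \<ge> 0"
    and nonpar: "\<And>i. det2 (edge P i) (edge P (Suc i)) \<noteq> 0"
    and par: "\<And>i. det2 (edge P (i + n)) (edge P i) = 0"
    and pos: "\<And>i j. 1 \<le> i \<Longrightarrow> i < j \<Longrightarrow> j \<le> n \<Longrightarrow> det2 (edge P i) (edge P j) > 0"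
    unfolding CPOS_def by auto
  have nz: "edge P k \<noteq> 0" for k using nonpar[of k] by auto
  obtain c where c: "edge P (i+n) = c *\<^sub>R edge P i" using par_scale[OF par[of i] nz[of i]] by auto
  have stp: "det2 (edge P i) (edge P k) > 0" if "i+1 \<le> k" "k \<le> i+n-1" for k
  proof (cases "k \<le> n")
    case True thus ?thesis using pos[of i k] that less.prems by auto
  next
    case False
    define j where "j = k - n"
    have j: "1 \<le> j" "j < i" "k = j + n" using False that unfolding j_def by auto
    obtain cj where cj: "cj < 0" "edge P (j+n) = cj *\<^sub>R edge P j" using less.IH[of j] j less.prems by auto
    have "det2 (edge P i) (edge P k) = (- cj) * det2 (edge P j) (edge P i)"
      using cj(2) j(3) by (simp add: det2_def algebra_simps)
    moreover have "det2 (edge P j) (edge P i) > 0" using pos[of j i] j less.prems by auto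
    ultimately show ?thesis using cj(1) by (simp add: mult_neg_pos)
  qed
  define g where "g k = det2 (edge P i) (P k - P i)" for k
  have gs: "g (Suc k) = g k + det2 (edge P i) (edge P k)" for k
    by (simp add: g_def edge_def det2_def algebra_simps)
  have g0: "g k \<ge> 0" if "i+1 \<le> k" "k \<le> i+n-1" for k
    using that
  proof (induction k rule: dec_induct)
    case base show ?case by (simp add: g_def edge_def)
  next
    case (step k) thus ?case using gs[of k] stp[of k] by auto
  qed
  have hpos: "g (i+n) > 0"
  proof -
    have "i+n = Suc (i+n-1)" using n2 by auto
    hence "g (i+n) = g (i+n-1) + det2 (edge P i) (edge P (i+n-1))" using gs by metis
    moreover have "g (i+n-1) \<ge> 0" using g0 n2 by auto
    moreover have "det2 (edge P i) (edge P (i+n-1)) > 0" using stp n2 by auto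
    ultimately show ?thesis by simp
  qed
  have "det2 (edge P (i+n)) (P i - P (i+n)) \<ge> 0" using conv by blast
  hence ge: "(- c) * g (i+n) \<ge> 0" using c by (simp add: g_def det2_def algebra_simps)
  have "c \<le> 0"
  proof (rule ccontr)
    assume "\<not> c \<le> 0"
    hence "c * g (i+n) > 0" using hpos by simp
    thus False using ge by simp
  qed
  moreover have "c \<noteq> 0" using c nz[of "i+n"] by auto
  ultimately show ?case using c by (intro exI[of _ c]) auto
qed

lemma win2:
  assumes C: "CPOS n P" and li: "n+1 \<le> l" "l < i" "i < 2*n+1"
  shows "det2 (edge P l) (edge P i) > 0"
proof -
  define l' where "l' = l - n"
  define i' where "i' = i - n"
  have idx: "l = l'+n" "i = i'+n" "1 \<le> l'" "l' < i'" "i' \<le> n" using li unfolding l'_def i'_def by auto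
  obtain cl where cl: "cl < 0" "edge P (l'+n) = cl *\<^sub>R edge P l'" using cneg[OF C, of l'] idx by auto
  obtain ci where ci: "ci < 0" "edge P (i'+n) = ci *\<^sub>R edge P i'" using cneg[OF C, of i'] idx by auto
  have "det2 (edge P l') (edge P i') > 0" using C idx unfolding CPOS_def by auto
  moreover have "det2 (edge P l) (edge P i) = (cl * ci) * det2 (edge P l') (edge P i')"
    using cl ci idx by (simp add: det2_def algebra_simps)
  moreover have "cl * ci > 0" using cl ci by (simp add: mult_neg_neg)
  ultimately show ?thesis by simp
qed

lemma shoelace:
  assumes "a < b"
  shows "(\<Sum>k=a+1..<b. det2 (P k - P a) (P (Suc k) - P a)) = (\<Sum>k=a..<b. det2 (P k) (P (Suc k))) + det2 (P b) (P a)"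
  using Suc_leI[OF assms]
proof (induction b rule: dec_induct)
  case base thus ?case by (simp add: det2_def)
next
  case (step b)
  have "a + 1 \<le> b" "a \<le> b" using step by auto
  thus ?case using step.IH by (simp add: sum.atLeastLessThan_Suc det2_def algebra_simps)
qed


lemma perj:
  "4 * det2 (vhalf n P j) (uvec n P j) =
     det2 (P (j+n)) (P (Suc (j+n))) - det2 (P j) (P (Suc j))
     - (det2 (P (Suc j)) (P (Suc j + n)) - det2 (P j) (P (j + n)))
     + det2 (edge P j) (edge P (j+n))"
  by (simp add: vhalf_def uvec_def midpt_def edge_def det2_def algebra_simps)

theorem mainTheorem8:
  fixes n :: nat and P :: "nat \<Rightarrow> real^2"
  assumes "CPOS n P"
  shows "measure lebesgue (convex hull (P ` {n+1..2*n+1}))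
           - measure lebesgue (convex hull (P ` {1..n+1}))
         = 2 * (\<Sum>j=1..n. det2 (vhalf n P j) (uvec n P j))"
proof -
  from assms have n2: "n \<ge> 2" and per: "\<And>i. P (i + 2*n) = P i"
    and conv: "\<And>i j. det2 (edge P i) (P j - P i) \<ge> 0"
    and par: "\<And>i. det2 (edge P (i + n)) (edge P i) = 0"
    and pos: "\<And>i j. 1 \<le> i \<Longrightarrow> i < j \<Longrightarrow> j \<le> n \<Longrightarrow> det2 (edge P i) (edge P j) > 0"
    unfolding CPOS_def by auto
  interpret F1: fan P 1 "n+1"
    by unfold_locales (use n2 conv pos in auto)
  interpret F2: fan P "n+1" "2*n+1"
    by unfold_locales (use n2 conv win2[OF assms] in auto)
  have A1: "measure lebesgue (convex hull (P ` {1..n+1})) =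
     ((\<Sum>k=1..<n+1. det2 (P k) (P (Suc k))) + det2 (P (n+1)) (P 1)) / 2"
    using F1.fan_area shoelace[of 1 "n+1" P] n2 by simp
  have A2: "measure lebesgue (convex hull (P ` {n+1..2*n+1})) =
     ((\<Sum>k=n+1..<2*n+1. det2 (P k) (P (Suc k))) + det2 (P (2*n+1)) (P (n+1))) / 2"
    using F2.fan_area shoelace[of "n+1" "2*n+1" P] n2 by simp
  have p1: "P (2*n+1) = P 1" using per[of 1] by (simp add: add.commute)
  have r1: "(\<Sum>k=n+1..<2*n+1. det2 (P k) (P (Suc k))) = (\<Sum>j=1..n. det2 (P (j+n)) (P (Suc (j+n))))"
  proof -
    have "{n+1..<2*n+1} = {1+n..<(n+1)+n}" by auto
    hence "(\<Sum>k=n+1..<2*n+1. det2 (P k) (P (Suc k))) = (\<Sum>j=1..<n+1. det2 (P (j+n)) (P (Suc (j+n))))"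
      by (simp only: sum.shift_bounds_nat_ivl)
    also have "{1..<n+1} = {1..n}" by auto
    finally show ?thesis by simp
  qed
  have r2: "(\<Sum>k=1..<n+1. det2 (P k) (P (Suc k))) = (\<Sum>j=1..n. det2 (P j) (P (Suc j)))"
  proof -
    have "{1..<n+1} = {1..n}" by auto
    thus ?thesis by simp
  qed
  have pz: "det2 (edge P j) (edge P (j+n)) = 0" for j
    using par[of j] by (simp add: det2_def algebra_simps)
  have tel: "(\<Sum>j=1..n. det2 (P (Suc j)) (P (Suc j + n)) - det2 (P j) (P (j + n)))
      = det2 (P (Suc n)) (P (Suc n + n)) - det2 (P 1) (P (1 + n))"
    using sum_Suc_diff[of 1 n "\<lambda>j. det2 (P j) (P (j + n))"] n2 by simp
  have "4 * (\<Sum>j=1..n. det2 (vhalf n P j) (uvec n P j)) =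
     (\<Sum>j=1..n. det2 (P (j+n)) (P (Suc (j+n)))) - (\<Sum>j=1..n. det2 (P j) (P (Suc j)))
     - (\<Sum>j=1..n. det2 (P (Suc j)) (P (Suc j + n)) - det2 (P j) (P (j + n)))"
    by (simp add: sum_distrib_left perj pz sum_subtractf)
  also have "\<dots> = (\<Sum>j=1..n. det2 (P (j+n)) (P (Suc (j+n)))) - (\<Sum>j=1..n. det2 (P j) (P (Suc j)))
     - (det2 (P (n+1)) (P 1) - det2 (P 1) (P (n+1)))"
    unfolding tel using p1 by (simp add: add.commute mult_2)
  finally have "4 * (\<Sum>j=1..n. det2 (vhalf n P j) (uvec n P j)) = \<dots>" .
  thus ?thesis unfolding A1 A2 r1 r2 p1 by (simp add: field_simps)
qed

end
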